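(* Let $\mathcal C\subseteq\mathcal L_{n,q}$ be an $\mathbb F_{q^n}$-linear rank metric code of dimension $k$ which contains an MRD code $\mathcal G$ equivalent to a generalized Gabidulin code $\mathcal G_{l,s}$ of dimension $l\le k$ (with $\gcd(s,n)=1$). Then there exist an invertible (permutation) linearized polynomial $p(x)$ and $k-l$ linearized polynomials $q_1(x),\ldots,q_{k-l}(x)$ such that \[\mathcal C=\langle q_1(x),\ldots,q_{k-l}(x),p(x),p(x)^{[s]},\ldots,p(x)^{[s(l-1)]}\rangle_{\mathbb F_{q^n}}.\]
   Context: $q$ is a prime power, $[i]:=q^i$. $\mathcal L_{n,q}$ is the $\mathbb F_{q^n}$-vector space of linearized polynomials $f(x)=\sum_{i=0}^{n-1}a_ix^{[i]}$, $a_i\in\mathbb F_{q^n}$, identified with $\mathbb F_q$-linear maps of $\mathbb F_{q^n}$; a permutation (invertible) polynomial is one inducing a bijection. A rank metric code here is an $\mathbb F_q$-subspace of $\mathcal L_{n,q}$ with rank distance $d(f,g)=\mathrm{rk}(f-g)$; it is MRD if $|\mathcal C|=q^{n(n-d+1)}$, $d$ the minimum distance. For $f(x)=\sum_i a_ix^{[i]}$, $f(x)^{[j]}:=x^{[j]}\circ f(x)=\sum_i a_i^{[j]}x^{[(i+j)\bmod n]}$. $\mathcal G_{l,s}=\langle x,x^{[s]},\ldots,x^{[s(l-1)]}\rangle_{\mathbb F_{q^n}}$ with $\gcd(s,n)=1$. Two codes $\mathcal C,\mathcal C'$ are equivalent if there are invertible $h,g\in\mathcal L_{n,q}$ and a field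 automorphism $\sigma$ (acting on coefficients) with $\{h\circ f^\sigma\circ g\colon f\in\mathcal C\}=\mathcal C'$. *)

theory Defs
  imports "HOL-Number_Theory.Number_Theory" "HOL-Library.Function_Algebras"
begin

(* The field F_{q^n} is a finite field type 'a with CARD('a) = q^n.
   A linearized polynomial sum_{i<n} a_i x^[i] is identified with the
   F_q-linear map of F_{q^n} it induces. *)

definition lin_eval :: "nat \<Rightarrow> nat \<Rightarrow> (nat \<Rightarrow> 'a::field) \<Rightarrow> 'a \<Rightarrow> 'a" where
  "lin_eval q n a = (\<lambda>x. \<Sum>i<n. a i * x ^ (q ^ i))"

definition Lnq :: "nat \<Rightarrow> nat \<Rightarrow> ('a::field \<Rightarrow> 'a) set" where
  "Lnq q n = {lin_eval q n a | a. True}"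

(* coefficients of a linearized polynomial (unique for the field of size q^n) *)
definition coeffs :: "nat \<Rightarrow> nat \<Rightarrow> ('a::field \<Rightarrow> 'a) \<Rightarrow> nat \<Rightarrow> 'a" where
  "coeffs q n f = (SOME a. (\<forall>i\<ge>n. a i = 0) \<and> f = lin_eval q n a)"

definition scl :: "'a::field \<Rightarrow> ('a \<Rightarrow> 'a) \<Rightarrow> ('a \<Rightarrow> 'a)" where
  "scl c f = (\<lambda>x. c * f x)"

definition frob_pow :: "nat \<Rightarrow> nat \<Rightarrow> ('a::field \<Rightarrow> 'a) \<Rightarrow> ('a \<Rightarrow> 'a)" where
  "frob_pow q j f = (\<lambda>x. (f x) ^ (q ^ j))"

definition Fq :: "nat \<Rightarrow> 'a::field set" where
  "Fq q = {x. x ^ q = x}"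

definition Fq_span :: "nat \<Rightarrow> 'a::field set \<Rightarrow> 'a set" where
  "Fq_span q A = {y. \<exists>c. (\<forall>a\<in>A. c a \<in> Fq q) \<and> y = (\<Sum>a\<in>A. c a * a)}"

definition Fq_dim :: "nat \<Rightarrow> 'a::field set \<Rightarrow> nat" where
  "Fq_dim q V = (LEAST r. \<exists>A. finite A \<and> card A = r \<and> Fq_span q A = V)"

definition rk :: "nat \<Rightarrow> ('a::field \<Rightarrow> 'a) \<Rightarrow> nat" where
  "rk q f = Fq_dim q (range f)"

definition rank_code :: "nat \<Rightarrow> nat \<Rightarrow> ('a::field \<Rightarrow> 'a) set \<Rightarrow> bool" where
  "rank_code q n C \<longleftrightarrow> C \<subseteq> Lnq q n \<and> 0 \<in> C \<and>
     (\<forall>f\<in>C. \<forall>g\<in>C. f + g \<in> C) \<and> (\<forall>c\<in>Fq q. \<forall>f\<in>C. scl c f \<in> C)"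

definition min_dist :: "nat \<Rightarrow> ('a::field \<Rightarrow> 'a) set \<Rightarrow> nat" where
  "min_dist q C = Min {rk q (f - g) | f g. f \<in> C \<and> g \<in> C \<and> f \<noteq> g}"

definition is_MRD :: "nat \<Rightarrow> nat \<Rightarrow> ('a::field \<Rightarrow> 'a) set \<Rightarrow> bool" where
  "is_MRD q n C \<longleftrightarrow> rank_code q n C \<and> card C = q ^ (n * (n - min_dist q C + 1))"

definition Gab :: "nat \<Rightarrow> nat \<Rightarrow> nat \<Rightarrow> ('a::field \<Rightarrow> 'a) set" where
  "Gab q l s = module.span scl {(\<lambda>x. x ^ (q ^ (s * i))) | i. i < l}"

definition field_aut :: "('a::field \<Rightarrow> 'a) \<Rightarrow> bool" where
  "field_aut \<sigma> \<longleftrightarrow> bij \<sigma> \<and> (\<forall>a b. \<sigma> (a + b) = \<sigma> a + \<sigma> b) \<and> (\<forall>a b. \<sigma> (a * b) = \<sigma> a * \<sigma> b)"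

definition aut_act :: "nat \<Rightarrow> nat \<Rightarrow> ('a::field \<Rightarrow> 'a) \<Rightarrow> ('a \<Rightarrow> 'a) \<Rightarrow> ('a \<Rightarrow> 'a)" where
  "aut_act q n \<sigma> f = lin_eval q n (\<lambda>i. \<sigma> (coeffs q n f i))"

definition code_equiv :: "nat \<Rightarrow> nat \<Rightarrow> ('a::field \<Rightarrow> 'a) set \<Rightarrow> ('a \<Rightarrow> 'a) set \<Rightarrow> bool" where
  "code_equiv q n C C' \<longleftrightarrow> (\<exists>h g \<sigma>. h \<in> Lnq q n \<and> g \<in> Lnq q n \<and> bij h \<and> bij g \<and>
      field_aut \<sigma> \<and> (\<lambda>f. h \<circ> aut_act q n \<sigma> f \<circ> g) ` C = C')"

end

theory Submission imports Defs "HOL-Computational_Algebra.Polynomial" begin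

interpretation VS: vector_space "scl :: 'a::field \<Rightarrow> ('a\<Rightarrow>'a) \<Rightarrow> ('a \<Rightarrow> 'a)"
  by unfold_locales (auto simp: scl_def algebra_simps fun_eq_iff)

definition mon :: "nat \<Rightarrow> nat \<Rightarrow> 'a::field \<Rightarrow> 'a" where
  "mon q j = (\<lambda>x. x ^ (q ^ j))"

lemma q_ge2: "primepow (q::nat) \<Longrightarrow> q \<ge> 2"
  using primepow_gt_Suc_0 by fastforce

lemma pow_card_same:
  fixes x :: "'a::{field,finite}"
  shows "x ^ card (UNIV :: 'a set) = x"
proof (cases "x = 0")
  case False
  have "x * (\<Prod>y\<in>UNIV-{0}. x * y) = x * x ^ (card (UNIV :: 'a set) - 1) * \<Prod>(UNIV-{0})"
    by (simp add: prod.distrib mult_ac)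
  also have "x * x ^ (card (UNIV :: 'a set) - 1) = x ^ Suc (card (UNIV :: 'a set) - 1)"
    by (subst power_Suc) auto
  also have "Suc (card (UNIV :: 'a set) - 1) = card (UNIV :: 'a set)"
    using finite_UNIV_card_ge_0[where ?'a = 'a] by simp
  also have "(\<Prod>y\<in>UNIV-{0}. x * y) = (\<Prod>y\<in>UNIV-{0}. y)"
    by (rule prod.reindex_bij_witness[of _ "\<lambda>y. y / x" "\<lambda>y. x * y"]) (use False in auto)
  finally show ?thesis
    by simp
qed (use finite_UNIV_card_ge_0[where ?'a = 'a] in auto)

lemma pow_card_pow_same:
  fixes x :: "'a::{field,finite}"
  assumes "card (UNIV :: 'a set) = q ^ n"
  shows "x ^ (q ^ (n * d)) = x"
proof (induction d)
  case (Suc d)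
  have "x ^ (q ^ (n * Suc d)) = (x ^ (q ^ (n * d))) ^ (q ^ n)"
    by (simp add: power_add power_mult[symmetric] mult.commute)
  then show ?case using Suc pow_card_same[of x] assms by simp
qed simp

lemma mon_mod:
  fixes x :: "'a::{field,finite}"
  assumes "card (UNIV :: 'a set) = q ^ n"
  shows "x ^ (q ^ j) = x ^ (q ^ (j mod n))"
proof -
  have "q ^ j = q ^ (n * (j div n)) * q ^ (j mod n)"
    by (simp add: power_add[symmetric])
  hence "x ^ (q ^ j) = (x ^ (q ^ (n * (j div n)))) ^ (q ^ (j mod n))"
    by (simp add: power_mult)
  thus ?thesis using pow_card_pow_same[OF assms] by simp
qed

lemma frob_add:
  fixes x y :: "'a::{field,finite}"
  assumes "primepow q" "card (UNIV :: 'a set) = q ^ n" "n \<ge> 1"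
  shows "(x + y) ^ (q ^ j) = x ^ (q ^ j) + y ^ (q ^ j)"
proof -
  obtain p e where pe: "prime p" "e > 0" "q = p ^ e" using assms(1) unfolding primepow_def by blast
  have cp: "prime CHAR('a)"
    by (rule prime_CHAR_semidom) (rule finite_imp_CHAR_pos, simp)
  have "CHAR('a) dvd p ^ (e * n)" using CHAR_dvd_CARD[where 'a='a] assms(2) pe
    by (simp add: power_mult)
  hence "CHAR('a) dvd p" using cp prime_dvd_power by blast
  hence "CHAR('a) = p" using cp pe(1) primes_dvd_imp_eq by blast
  hence "q ^ j = CHAR('a) ^ (e * j)" using pe by (simp add: power_mult)
  thus ?thesis using freshmans_dream'[OF cp] by blast
qed


lemma sum_fun_app: "(\<Sum>i\<in>A. (f i :: 'b \<Rightarrow> 'c::comm_monoid_add)) x = (\<Sum>i\<in>A. f i x)"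
  by (induction A rule: infinite_finite_induct) auto

lemma lin_eval_sum: "lin_eval q n a = (\<Sum>i<n. scl (a i) (mon q i))"
  by (rule ext) (simp add: lin_eval_def sum_fun_app scl_def mon_def)

lemma sum_delta_mult:
  fixes g :: "nat \<Rightarrow> 'b::comm_semiring_1"
  shows "j < n \<Longrightarrow> (\<Sum>i<n. (if i = j then c else 0) * g i) = c * g j"
proof -
  assume "j < n"
  have "(\<Sum>i<n. (if i = j then c else 0) * g i) = (\<Sum>i<n. (if i = j then c * g j else 0))"
    by (rule sum.cong) auto
  thus ?thesis using \<open>j < n\<close> by simp
qed

definition Mset :: "nat \<Rightarrow> nat \<Rightarrow> ('a::field \<Rightarrow> 'a) set" where
  "Mset q n = mon q ` {..<n}"

lemma Lnq_subspace: "VS.subspace (Lnq q n :: ('a::field \<Rightarrow> 'a) set)"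
  unfolding VS.subspace_def
proof (intro conjI ballI allI)
  show "0 \<in> Lnq q n" unfolding Lnq_def
    by (rule CollectI, rule exI[of _ "\<lambda>_. 0"]) (auto simp: lin_eval_def fun_eq_iff)
next
  fix x y :: "'a \<Rightarrow> 'a" assume "x \<in> Lnq q n" "y \<in> Lnq q n"
  then obtain a b where "x = lin_eval q n a" "y = lin_eval q n b" unfolding Lnq_def by blast
  thus "x + y \<in> Lnq q n" unfolding Lnq_def
    by (intro CollectI exI[of _ "\<lambda>i. a i + b i"]) (auto simp: lin_eval_def fun_eq_iff sum.distrib algebra_simps)
next
  fix c :: 'a and x :: "'a \<Rightarrow> 'a" assume "x \<in> Lnq q n"
  then obtain a where "x = lin_eval q n a" unfolding Lnq_def by blast
  thus "scl c x \<in> Lnq q n" unfolding Lnq_def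
    by (intro CollectI exI[of _ "\<lambda>i. c * a i"]) (auto simp: lin_eval_def fun_eq_iff sum_distrib_left scl_def algebra_simps)
qed

lemma Lnq_span: "Lnq q n = VS.span (Mset q n :: ('a::field \<Rightarrow> 'a) set)"
proof (rule equalityI)
  show "Lnq q n \<subseteq> VS.span (Mset q n :: ('a \<Rightarrow> 'a) set)"
  proof
    fix f :: "'a \<Rightarrow> 'a" assume "f \<in> Lnq q n"
    then obtain a where "f = lin_eval q n a" unfolding Lnq_def by blast
    hence "f = (\<Sum>i<n. scl (a i) (mon q i))" by (simp add: lin_eval_sum)
    also have "\<dots> \<in> VS.span (Mset q n)"
      by (intro VS.span_sum VS.span_scale VS.span_base) (auto simp: Mset_def)
    finally show "f \<in> VS.span (Mset q n :: ('a \<Rightarrow> 'a) set)" .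
  qed
next
  have "Mset q n \<subseteq> (Lnq q n :: ('a \<Rightarrow> 'a) set)"
  proof
    fix f :: "'a \<Rightarrow> 'a" assume "f \<in> Mset q n"
    then obtain j where j: "j < n" "f = mon q j" unfolding Mset_def by blast
    show "f \<in> Lnq q n" unfolding Lnq_def
      by (intro CollectI exI[of _ "\<lambda>i. if i = j then 1 else 0"])
         (use j in \<open>auto simp: lin_eval_def fun_eq_iff mon_def sum_delta_mult\<close>)
  qed
  thus "VS.span (Mset q n :: ('a \<Rightarrow> 'a) set) \<subseteq> Lnq q n"
    using VS.span_minimal Lnq_subspace by blast
qed

lemma mon_in_Lnq:
  assumes "card (UNIV :: 'a::{field,finite} set) = q ^ n" "n \<ge> 1"
  shows "(mon q j :: 'a \<Rightarrow> 'a) \<in> Lnq q n"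
proof -
  have "(mon q j :: 'a \<Rightarrow> 'a) = mon q (j mod n)"
    using mon_mod[OF assms(1)] by (auto simp: mon_def fun_eq_iff)
  also have "\<dots> \<in> Mset q n" using assms(2) by (auto simp: Mset_def)
  finally show ?thesis using Lnq_span VS.span_base by blast
qed

lemma frob_comp_Lnq:
  assumes "primepow q" "card (UNIV :: 'a::{field,finite} set) = q ^ n" "n \<ge> 1"
    and "(f :: 'a \<Rightarrow> 'a) \<in> Lnq q n"
  shows "mon q j \<circ> f \<in> Lnq q n"
proof -
  obtain a where fa: "f = lin_eval q n a" using assms(4) unfolding Lnq_def by blast
  have sumfrob: "(\<Sum>i\<in>A. (g i :: 'a)) ^ (q ^ j) = (\<Sum>i\<in>A. g i ^ (q ^ j))" for A and g :: "nat \<Rightarrow> 'a"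
    by (induction A rule: infinite_finite_induct)
       (use q_ge2[OF assms(1)] in \<open>auto simp: frob_add[OF assms(1-3)] power_0_left\<close>)
  have "mon q j \<circ> f = (\<Sum>i<n. scl (a i ^ (q ^ j)) (mon q (i + j)))"
    by (rule ext) (simp add: fa lin_eval_def mon_def sum_fun_app scl_def sumfrob
        power_mult_distrib power_mult[symmetric] power_add mult.commute)
  also have "\<dots> \<in> Lnq q n"
    using Lnq_span mon_in_Lnq[OF assms(2,3)]
    by (metis (no_types, lifting) VS.span_scale VS.span_sum)
  finally show ?thesis .
qed

lemma comp_Lnq:
  assumes "primepow q" "card (UNIV :: 'a::{field,finite} set) = q ^ n" "n \<ge> 1"
    and "(f :: 'a \<Rightarrow> 'a) \<in> Lnq q n" "g \<in> Lnq q n"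
  shows "f \<circ> g \<in> Lnq q n"
proof -
  obtain a where fa: "f = lin_eval q n a" using assms(4) unfolding Lnq_def by blast
  have "f \<circ> g = (\<Sum>i<n. scl (a i) (mon q i \<circ> g))"
    by (rule ext) (simp add: fa lin_eval_def mon_def sum_fun_app scl_def)
  also have "\<dots> \<in> Lnq q n"
    using Lnq_span frob_comp_Lnq[OF assms(1-3) assms(5)]
    by (metis (no_types, lifting) VS.span_scale VS.span_sum VS.span_base)
  finally show ?thesis .
qed


lemma lin_eval_zero_coeff:
  assumes "primepow q" "card (UNIV :: 'a::{field,finite} set) = q ^ n" "n \<ge> 1"
    and "\<And>x::'a. lin_eval q n a x = 0" "j < n"
  shows "a j = 0"
proof -
  have q2: "q \<ge> 2" using q_ge2[OF assms(1)] .
  define P :: "'a poly" where "P = (\<Sum>i<n. monom (a i) (q^i))"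
  have ev: "poly P x = lin_eval q n a x" for x
    by (simp add: P_def poly_sum poly_monom lin_eval_def)
  have P0: "P = 0"
  proof (rule ccontr)
    assume "P \<noteq> 0"
    hence "card {x. poly P x = 0} \<le> degree P" by (rule card_poly_roots_bound)
    also have "degree P \<le> q ^ (n - 1)"
      unfolding P_def
    proof (rule degree_sum_le)
      fix i assume "i \<in> {..<n}"
      hence "q ^ i \<le> q ^ (n - 1)" using q2 by (intro power_increasing) auto
      thus "degree (monom (a i) (q ^ i)) \<le> q ^ (n - 1)"
        using degree_monom_le order_trans by blast
    qed simp
    also have "\<dots> < q ^ n" using q2 assms(3) by (intro power_strict_increasing) auto
    also have "{x. poly P x = 0} = UNIV" using ev assms(4) by auto
    finally show False using assms(2) by simp
  qed
  have "coeff P (q ^ j) = (\<Sum>i<n. if q ^ i = q ^ j then a i else 0)"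
    by (simp add: P_def coeff_sum coeff_monom)
  also have "\<dots> = (\<Sum>i<n. if i = j then a i else 0)"
    using q2 by (intro sum.cong) (auto simp: power_inject_exp)
  also have "\<dots> = a j" using assms(5) by simp
  finally show ?thesis using P0 by simp
qed

lemma mon_inj:
  assumes "primepow q" "card (UNIV :: 'a::{field,finite} set) = q ^ n" "n \<ge> 1"
    and "(mon q j :: 'a \<Rightarrow> 'a) = mon q j'" "j < n" "j' < n"
  shows "j = j'"
proof (rule ccontr)
  assume ne: "j \<noteq> j'"
  define a :: "nat \<Rightarrow> 'a" where "a = (\<lambda>i. (if i = j then 1 else 0) - (if i = j' then 1 else 0))"
  have "lin_eval q n a x = 0" for x :: 'a
  proof -
    have "lin_eval q n a x = (\<Sum>i<n. (if i = j then 1 else 0) * x ^ q ^ i) - (\<Sum>i<n. (if i = j' then 1 else 0) * x ^ q ^ i)"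
      by (simp add: lin_eval_def a_def left_diff_distrib sum_subtractf)
    also have "\<dots> = mon q j x - mon q j' x"
      using assms(5,6) by (simp add: sum_delta_mult mon_def)
    finally show ?thesis using assms(4) by simp
  qed
  hence "a j = 0" using lin_eval_zero_coeff[OF assms(1-3)] assms(5) by blast
  thus False using ne by (simp add: a_def)
qed

lemma coeffs_prop:
  assumes "f \<in> Lnq q n"
  shows "(\<forall>i\<ge>n. Defs.coeffs q n f i = 0) \<and> f = lin_eval q n (Defs.coeffs q n f)"
proof -
  obtain a where fa: "f = lin_eval q n a" using assms unfolding Lnq_def by blast
  let ?b = "\<lambda>i. if i < n then a i else 0"
  have "f = lin_eval q n ?b" using fa by (simp add: lin_eval_def)
  hence "\<exists>b. (\<forall>i\<ge>n. b i = 0) \<and> f = lin_eval q n b" by (intro exI[of _ ?b]) auto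
  thus ?thesis unfolding Defs.coeffs_def by (rule someI_ex)
qed

lemma coeffs_eq:
  assumes "primepow q" "card (UNIV :: 'a::{field,finite} set) = q ^ n" "n \<ge> 1"
    and "(f :: 'a \<Rightarrow> 'a) = lin_eval q n a" "\<forall>i\<ge>n. a i = 0"
  shows "Defs.coeffs q n f = a"
proof
  fix i
  have fL: "f \<in> Lnq q n" using assms(4) unfolding Lnq_def by blast
  let ?c = "Defs.coeffs q n f"
  have c: "\<forall>i\<ge>n. ?c i = 0" "f = lin_eval q n ?c" using coeffs_prop[OF fL] by auto
  show "?c i = a i"
  proof (cases "i < n")
    case True
    have "lin_eval q n (\<lambda>i. ?c i - a i) x = 0" for x
    proof -
      have "lin_eval q n (\<lambda>i. ?c i - a i) x = lin_eval q n ?c x - lin_eval q n a x"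
        by (simp add: lin_eval_def left_diff_distrib sum_subtractf)
      thus ?thesis using c(2) assms(4) by simp
    qed
    thus ?thesis using lin_eval_zero_coeff[OF assms(1-3), of "\<lambda>i. ?c i - a i" i] True by simp
  qed (use c assms(5) in auto)
qed


lemma bij_funpow_id:
  fixes h :: "'a::finite \<Rightarrow> 'a"
  assumes "bij h"
  shows "\<exists>m>0. h ^^ m = id"
proof -
  have "\<not> inj (\<lambda>m::nat. h ^^ m)"
  proof
    assume "inj (\<lambda>m::nat. h ^^ m)"
    hence "infinite (range (\<lambda>m::nat. h ^^ m))" using finite_imageD infinite_UNIV_nat by blast
    thus False using finite_UNIV by (metis finite_subset subset_UNIV)
  qed
  then obtain a b where ab: "a \<noteq> b" "h ^^ a = h ^^ b" unfolding inj_def by blast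
  have key: "h ^^ (y - x) = id" if "x < y" "h ^^ x = h ^^ y" for x y
  proof -
    have "h ^^ y = h ^^ (y - x) \<circ> h ^^ x" using that(1) by (simp add: funpow_add[symmetric])
    hence "h ^^ (y - x) \<circ> h ^^ x = id \<circ> h ^^ x" using that(2) by simp
    moreover have "surj (h ^^ x)" using bij_is_surj[OF bij_betw_funpow[OF assms[unfolded bij_def[symmetric]]]] .
    ultimately show ?thesis by (metis fun.map_comp surj_fun_eq)
  qed
  show ?thesis
  proof (cases "a < b")
    case True thus ?thesis using key[OF True ab(2)] by (intro exI[of _ "b - a"]) auto
  next
    case False hence "b < a" using ab(1) by simp
    thus ?thesis using key[of b a] ab(2) by (intro exI[of _ "a - b"]) auto
  qed
qed

lemma inv_Lnq:
  assumes "primepow q" "card (UNIV :: 'a::{field,finite} set) = q ^ n" "n \<ge> 1"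
    and "(h :: 'a \<Rightarrow> 'a) \<in> Lnq q n" "bij h"
  shows "inv_into UNIV h \<in> Lnq q n"
proof -
  obtain m where m: "m > 0" "h ^^ m = id" using bij_funpow_id[OF assms(5)] by blast
  have pw: "h ^^ k \<in> Lnq q n" for k
  proof (induction k)
    case 0
    have "(id :: 'a \<Rightarrow> 'a) = mon q 0" by (simp add: mon_def fun_eq_iff)
    thus ?case using mon_in_Lnq[OF assms(2,3), of 0] by (simp add: id_def)
  next
    case (Suc k) show ?case by (subst funpow.simps(2)) (rule comp_Lnq[OF assms(1-3) assms(4) Suc])
  qed
  have ms: "m = Suc (m - 1)" using m by simp
  have "h \<circ> h ^^ (m - 1) = id" using m(2) ms funpow.simps(2)[of "m - 1" h] by simp
  moreover have "h ^^ (m - 1) \<circ> h = id" using m(2) ms funpow_Suc_right[of "m - 1" h] by simp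
  ultimately have "inv_into UNIV h = h ^^ (m - 1)" by (rule inv_unique_comp)
  thus ?thesis using pw by simp
qed


lemma aut_0: "field_aut \<sigma> \<Longrightarrow> \<sigma> (0::'a::field) = 0"
  unfolding field_aut_def by (metis add_cancel_right_right add_0)

lemma aut_1: assumes "field_aut \<sigma>" shows "\<sigma> (1::'a::field) = 1"
proof -
  have "\<sigma> 1 \<noteq> 0" using assms aut_0[OF assms] unfolding field_aut_def bij_def inj_def
    by (metis one_neq_zero)
  moreover have "\<sigma> 1 = \<sigma> 1 * \<sigma> 1" using assms unfolding field_aut_def by (metis mult_1)
  ultimately show ?thesis by (metis mult_cancel_left1)
qed

lemma aut_pow: "field_aut \<sigma> \<Longrightarrow> \<sigma> ((x::'a::field) ^ k) = \<sigma> x ^ k"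
  by (induction k) (auto simp: aut_1 field_aut_def)

lemma aut_sum: "field_aut \<sigma> \<Longrightarrow> \<sigma> (\<Sum>i\<in>A. (f i :: 'a::field)) = (\<Sum>i\<in>A. \<sigma> (f i))"
  by (induction A rule: infinite_finite_induct) (auto simp: aut_0 field_aut_def)

lemma aut_mult: "field_aut \<sigma> \<Longrightarrow> \<sigma> ((x::'a::field) * y) = \<sigma> x * \<sigma> y"
  by (simp add: field_aut_def)

lemma aut_add: "field_aut \<sigma> \<Longrightarrow> \<sigma> ((x::'a::field) + y) = \<sigma> x + \<sigma> y"
  by (simp add: field_aut_def)

lemma aut_inv:
  assumes "field_aut (\<sigma> :: 'a::field \<Rightarrow> 'a)"
  shows "field_aut (inv_into UNIV \<sigma>)"
proof -
  have b: "bij \<sigma>" using assms field_aut_def by blast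
  let ?t = "inv_into UNIV \<sigma>"
  have st: "\<sigma> (?t x) = x" for x using surj_f_inv_f[OF bij_is_surj[OF b]] by simp
  have ts: "?t (\<sigma> x) = x" for x using b by (simp add: bij_is_inj)
  show ?thesis unfolding field_aut_def
  proof (intro conjI allI)
    show "bij ?t" using b by (rule bij_imp_bij_inv)
    fix a b
    show "?t (a + b) = ?t a + ?t b" using ts[of "?t a + ?t b"] st[of a] st[of b] aut_add[OF assms, of "?t a" "?t b"] by simp
    show "?t (a * b) = ?t a * ?t b" using ts[of "?t a * ?t b"] st[of a] st[of b] aut_mult[OF assms, of "?t a" "?t b"] by simp
  qed
qed

lemma aut_act_conj:
  assumes "field_aut (\<sigma> :: 'a::field \<Rightarrow> 'a)" "f \<in> Lnq q n"
  shows "aut_act q n \<sigma> f = (\<lambda>y. \<sigma> (f (inv_into UNIV \<sigma> y)))"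
proof
  fix y
  have b: "bij \<sigma>" using assms field_aut_def by blast
  let ?x = "inv_into UNIV \<sigma> y"
  have y: "y = \<sigma> ?x" using surj_f_inv_f[OF bij_is_surj[OF b]] by simp
  let ?c = "Defs.coeffs q n f"
  have f: "f = lin_eval q n ?c" using coeffs_prop[OF assms(2)] by blast
  have "aut_act q n \<sigma> f y = (\<Sum>i<n. \<sigma> (?c i) * \<sigma> ?x ^ q ^ i)"
    unfolding aut_act_def lin_eval_def using y by simp
  also have "\<dots> = \<sigma> (lin_eval q n ?c ?x)"
    by (simp add: lin_eval_def aut_sum[OF assms(1)] aut_mult[OF assms(1)] aut_pow[OF assms(1)])
  finally show "aut_act q n \<sigma> f y = \<sigma> (f ?x)" using f by simp
qed


lemma mon_in_closed:
  assumes q: "primepow q" "card (UNIV :: 'a::{field,finite} set) = q ^ n" "n \<ge> 1"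
    and cadd: "\<And>f g. P f \<Longrightarrow> P g \<Longrightarrow> P (f + g)"
    and cscl: "\<And>c f. P f \<Longrightarrow> P (scl c f)"
    and cmul: "\<And>b f. P f \<Longrightarrow> P (f \<circ> (\<lambda>y::'a. b * y))"
    and cL: "\<And>f. P f \<Longrightarrow> f \<in> Lnq q n"
    and f0: "P f0" "f0 \<noteq> 0"
  shows "\<exists>j<n. P (mon q j)"
proof -
  define S where "S = (\<lambda>f::'a\<Rightarrow>'a. {j. j < n \<and> Defs.coeffs q n f j \<noteq> 0})"
  have "\<forall>f. P f \<and> f \<noteq> 0 \<and> card (S f) = N \<longrightarrow> (\<exists>j<n. P (mon q j))" for N
  proof (induction N rule: less_induct)
    case (less N)
    show ?case
    proof (intro allI impI, elim conjE)
      fix f assume Pf: "P f" and fne: "f \<noteq> 0" and cardN: "card (S f) = N"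
      have fL: "f \<in> Lnq q n" using cL[OF Pf] .
      define c where "c = Defs.coeffs q n f"
      have c: "\<forall>i\<ge>n. c i = 0" "f = lin_eval q n c" using coeffs_prop[OF fL] c_def by auto
      have finS: "finite (S f)" unfolding S_def by auto
      have "S f \<noteq> {}"
      proof
        assume "S f = {}"
        hence "\<forall>i<n. c i = 0" unfolding S_def c_def by auto
        hence "f = 0" using c(2) by (auto simp: lin_eval_def fun_eq_iff)
        thus False using fne by simp
      qed
      then obtain j0 where j0: "j0 \<in> S f" by blast
      hence j0n: "j0 < n" and cj0: "c j0 \<noteq> 0" unfolding S_def c_def by auto
      show "\<exists>j<n. P (mon q j)"
      proof (cases "S f = {j0}")
        case True
        have "f = scl (c j0) (mon q j0)"
        proof
          fix x
          have "f x = (\<Sum>i<n. c i * x ^ q ^ i)" using c(2) by (simp add: lin_eval_def)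
          also have "\<dots> = (\<Sum>i<n. (if i = j0 then c j0 else 0) * x ^ q ^ i)"
          proof (rule sum.cong)
            fix i assume "i \<in> {..<n}"
            thus "c i * x ^ q ^ i = (if i = j0 then c j0 else 0) * x ^ q ^ i"
              using True unfolding S_def c_def by auto
          qed simp
          also have "\<dots> = c j0 * x ^ q ^ j0" using j0n by (rule sum_delta_mult)
          finally show "f x = scl (c j0) (mon q j0) x" by (simp add: scl_def mon_def)
        qed
        hence "scl (inverse (c j0)) f = mon q j0" using cj0 by (auto simp: scl_def fun_eq_iff)
        thus ?thesis using cscl[OF Pf] j0n by metis
      next
        case False
        then obtain j1 where j1: "j1 \<in> S f" "j1 \<noteq> j0" using j0 by blast
        hence j1n: "j1 < n" and cj1: "c j1 \<noteq> 0" unfolding S_def c_def by auto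
        have "(mon q j0 :: 'a \<Rightarrow> 'a) \<noteq> mon q j1" using mon_inj[OF q _ j0n j1n] j1(2) by metis
        then obtain b :: 'a where b: "b ^ q ^ j0 \<noteq> b ^ q ^ j1" unfolding mon_def fun_eq_iff by blast
        define d where "d = (\<lambda>i. c i * (b ^ q ^ i - b ^ q ^ j0))"
        define g where "g = (f \<circ> (\<lambda>y. b * y)) + scl (- (b ^ q ^ j0)) f"
        have Pg: "P g" unfolding g_def by (rule cadd[OF cmul[OF Pf, of b] cscl[OF Pf]])
        have gd: "g = lin_eval q n d"
        proof
          fix x
          have "g x = (\<Sum>i<n. c i * (b * x) ^ q ^ i) - b ^ q ^ j0 * (\<Sum>i<n. c i * x ^ q ^ i)"
            unfolding g_def using c(2) by (simp add: lin_eval_def scl_def)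
          also have "\<dots> = (\<Sum>i<n. c i * (b ^ q ^ i - b ^ q ^ j0) * x ^ q ^ i)"
            by (simp add: sum_distrib_left sum_subtractf[symmetric] power_mult_distrib algebra_simps)
          finally show "g x = lin_eval q n d x" by (simp add: lin_eval_def d_def)
        qed
        have d0: "\<forall>i\<ge>n. d i = 0" using c(1) by (simp add: d_def)
        have cg: "Defs.coeffs q n g = d" by (rule coeffs_eq[OF q gd d0])
        have dj1: "d j1 \<noteq> 0" using cj1 b by (simp add: d_def)
        have gne: "g \<noteq> 0"
        proof
          assume "g = 0"
          hence "\<And>x. lin_eval q n d x = 0" using gd by (metis zero_fun_def)
          hence "d j1 = 0" using lin_eval_zero_coeff[OF q] j1n by blast
          thus False using dj1 by simp
        qed
        have "S g \<subseteq> S f - {j0}"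
          unfolding S_def cg by (auto simp: d_def c_def)
        hence "S g \<subset> S f" using j0 by blast
        hence "card (S g) < N" using cardN finS psubset_card_mono by blast
        thus ?thesis using less Pg gne by blast
      qed
    qed
  qed
  thus ?thesis using f0 by blast
qed


lemma pow_swap: "((z::'a::comm_monoid_mult) ^ a) ^ b = (z ^ b) ^ a"
  by (metis power_mult mult.commute)

lemma mon_bij:
  assumes q: "primepow q" "card (UNIV :: 'a::{field,finite} set) = q ^ n" "n \<ge> 1" and "j < n"
  shows "bij (mon q j :: 'a \<Rightarrow> 'a)"
proof -
  have "inj (mon q j :: 'a \<Rightarrow> 'a)"
  proof
    fix x y :: 'a assume "mon q j x = mon q j y"
    hence "(x ^ q ^ j) ^ q ^ (n - j) = (y ^ q ^ j) ^ q ^ (n - j)" by (simp add: mon_def)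
    moreover have "(z ^ q ^ j) ^ q ^ (n - j) = z" for z :: 'a
    proof -
      have "(z ^ q ^ j) ^ q ^ (n - j) = z ^ (q ^ n)"
        using assms(4) by (simp add: power_mult[symmetric] power_add[symmetric])
      thus ?thesis using pow_card_same[of z] q(2) by simp
    qed
    ultimately show "x = y" by simp
  qed
  thus ?thesis using finite_UNIV_inj_surj[of "mon q j :: 'a \<Rightarrow> 'a"] by (simp add: bij_def)
qed

lemma exists_p:
  assumes q: "primepow q" "card (UNIV :: 'a::{field,finite} set) = q ^ n" "n \<ge> 1"
    and CL: "C \<subseteq> Lnq q n" and Csub: "VS.subspace C" and GC: "(G :: ('a \<Rightarrow> 'a) set) \<subseteq> C"
    and eq: "code_equiv q n G (Gab q l s)"
  shows "\<exists>p. bij p \<and> p \<in> Lnq q n \<and> (\<forall>i<l. frob_pow q (s*i) p \<in> C)"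
proof (cases "l = 0")
  case True
  have "bij (mon q 0 :: 'a \<Rightarrow> 'a)" using mon_bij[OF q] q(3) by simp
  thus ?thesis using mon_in_Lnq[OF q(2,3)] True by blast
next
  case False
  obtain h g \<sigma> where hg: "h \<in> Lnq q n" "g \<in> Lnq q n" "bij h" "bij g" "field_aut \<sigma>"
    and img: "(\<lambda>f. h \<circ> aut_act q n \<sigma> f \<circ> g) ` G = Gab q l s"
    using eq unfolding code_equiv_def by blast
  define si where "si = inv_into UNIV \<sigma>"
  define hi where "hi = inv_into UNIV h"
  define gi where "gi = inv_into UNIV g"
  have bs: "bij \<sigma>" using hg(5) field_aut_def by blast
  have asi: "field_aut si" unfolding si_def by (rule aut_inv[OF hg(5)])
  have s1: "si (\<sigma> x) = x" for x unfolding si_def using bs by (simp add: bij_is_inj)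
  have s2: "\<sigma> (si x) = x" for x unfolding si_def using surj_f_inv_f[OF bij_is_surj[OF bs]] by simp
  have h1: "hi (h x) = x" for x unfolding hi_def using hg(3) by (simp add: bij_is_inj)
  have g2: "g (gi x) = x" for x unfolding gi_def using surj_f_inv_f[OF bij_is_surj[OF hg(4)]] by simp
  define T where "T = (\<lambda>\<phi> :: 'a \<Rightarrow> 'a. (\<lambda>x. si (\<phi> (gi (\<sigma> x)))))"
  have claimA: "T (\<lambda>y. hi (a * y ^ (q ^ (s * i)))) \<in> C" if "i < l" for i a
  proof -
    let ?t = "scl a (\<lambda>x::'a. x ^ (q ^ (s * i)))"
    have "?t \<in> Gab q l s" unfolding Gab_def
      by (rule VS.span_scale, rule VS.span_base, rule CollectI, rule exI[of _ i]) (simp add: that)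
    hence "?t \<in> (\<lambda>f. h \<circ> aut_act q n \<sigma> f \<circ> g) ` G" by (simp only: img)
    then obtain f where f: "f \<in> G" "?t = h \<circ> aut_act q n \<sigma> f \<circ> g" by (rule imageE)
    have fL: "f \<in> Lnq q n" using f(1) GC CL by blast
    have "T (\<lambda>y. hi (a * y ^ (q ^ (s * i)))) = f"
    proof
      fix x
      have "?t (gi (\<sigma> x)) = h (\<sigma> (f (si (g (gi (\<sigma> x))))))"
      proof -
        have "?t (gi (\<sigma> x)) = (h \<circ> aut_act q n \<sigma> f \<circ> g) (gi (\<sigma> x))" using f(2) by (simp only:)
        also have "\<dots> = h (\<sigma> (f (si (g (gi (\<sigma> x))))))"
          using aut_act_conj[OF hg(5) fL] unfolding si_def by simp
        finally show ?thesis .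
      qed
      also have "\<dots> = h (\<sigma> (f x))" using g2 s1 by simp
      finally show "T (\<lambda>y. hi (a * y ^ (q ^ (s * i)))) x = f x"
        unfolding T_def using h1 s1 by (simp add: scl_def)
    qed
    thus ?thesis using f(1) GC by blast
  qed
  define W where "W = (\<lambda>\<phi>. \<forall>i<l. T (\<phi> \<circ> mon q (s * i)) \<in> C)"
  define P where "P = (\<lambda>\<phi>. \<phi> \<in> Lnq q n \<and> (\<forall>b. W (\<phi> \<circ> (\<lambda>y::'a. b * y))))"
  have Tadd: "T ((\<phi> + \<psi>) \<circ> m) = T (\<phi> \<circ> m) + T (\<psi> \<circ> m)" for \<phi> \<psi> m
    unfolding T_def by (simp add: fun_eq_iff aut_add[OF asi])
  have Tscl: "T (scl c \<phi> \<circ> m) = scl (si c) (T (\<phi> \<circ> m))" for c \<phi> m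
    unfolding T_def by (simp add: fun_eq_iff aut_mult[OF asi] scl_def)
  have Wadd: "W (\<phi> + \<psi>)" if "W \<phi>" "W \<psi>" for \<phi> \<psi>
    using that unfolding W_def by (simp add: Tadd VS.subspace_add[OF Csub])
  have Wscl: "W (scl c \<phi>)" if "W \<phi>" for c \<phi>
    using that unfolding W_def by (simp add: Tscl VS.subspace_scale[OF Csub])
  have Padd: "P (\<phi> + \<psi>)" if "P \<phi>" "P \<psi>" for \<phi> \<psi>
  proof -
    have "(\<phi> + \<psi>) \<circ> (\<lambda>y::'a. b * y) = (\<phi> \<circ> (\<lambda>y. b * y)) + (\<psi> \<circ> (\<lambda>y. b * y))" for b
      by (simp add: fun_eq_iff)
    moreover have "\<phi> + \<psi> \<in> Lnq q n" using that VS.subspace_add[OF Lnq_subspace] unfolding P_def by blast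
    moreover have "W ((\<phi> \<circ> (\<lambda>y. b * y)) + (\<psi> \<circ> (\<lambda>y. b * y)))" for b
      using that unfolding P_def by (intro Wadd) auto
    ultimately show ?thesis unfolding P_def by simp
  qed
  have Pscl: "P (scl c \<phi>)" if "P \<phi>" for c \<phi>
  proof -
    have "scl c \<phi> \<circ> (\<lambda>y::'a. b * y) = scl c (\<phi> \<circ> (\<lambda>y. b * y))" for b
      by (simp add: fun_eq_iff scl_def)
    moreover have "scl c \<phi> \<in> Lnq q n" using that VS.subspace_scale[OF Lnq_subspace] unfolding P_def by blast
    moreover have "W (scl c (\<phi> \<circ> (\<lambda>y. b * y)))" for b
      using that unfolding P_def by (intro Wscl) auto
    ultimately show ?thesis unfolding P_def by simp
  qed
  have Pmul: "P (\<phi> \<circ> (\<lambda>y::'a. b * y))" if "P \<phi>" for b \<phi>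
  proof -
    have "\<phi> \<circ> (\<lambda>y::'a. b * y) \<circ> (\<lambda>y::'a. b' * y) = \<phi> \<circ> (\<lambda>y::'a. (b * b') * y)" for b'
      by (simp add: fun_eq_iff mult.assoc)
    moreover have "\<phi> \<circ> (\<lambda>y::'a. b * y) \<in> Lnq q n"
    proof -
      have "(\<lambda>y::'a. b * y) = scl b (mon q 0)" by (simp add: fun_eq_iff scl_def mon_def)
      moreover have "scl b (mon q 0) \<in> Lnq q n"
        using VS.subspace_scale[OF Lnq_subspace mon_in_Lnq[OF q(2,3)]] .
      ultimately have "(\<lambda>y::'a. b * y) \<in> Lnq q n" by simp
      thus ?thesis using comp_Lnq[OF q] that unfolding P_def by blast
    qed
    ultimately show ?thesis using that unfolding P_def by (simp add: comp_assoc)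
  qed
  have PL: "\<phi> \<in> Lnq q n" if "P \<phi>" for \<phi> using that unfolding P_def by blast
  have Phi: "P hi"
  proof -
    have "hi \<in> Lnq q n" unfolding hi_def by (rule inv_Lnq[OF q hg(1,3)])
    moreover have "W (hi \<circ> (\<lambda>y. b * y))" for b
      unfolding W_def using claimA by (simp add: comp_def mon_def)
    ultimately show ?thesis unfolding P_def by blast
  qed
  have hine: "hi \<noteq> 0" using h1[of 1] by (metis one_neq_zero zero_fun_def)
  obtain j0 where j0: "j0 < n" "P (mon q j0)"
    using mon_in_closed[OF q, of P, OF Padd Pscl Pmul PL Phi hine] by auto
  have Wj0: "W (mon q j0)"
  proof -
    have "mon q j0 \<circ> (\<lambda>y::'a. 1 * y) = mon q j0" by (simp add: fun_eq_iff)
    thus ?thesis using j0(2) unfolding P_def by (metis (no_types))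
  qed
  define p where "p = T (mon q j0)"
  have frob: "frob_pow q (s * i) p = T (mon q j0 \<circ> mon q (s * i))" for i
    unfolding p_def T_def frob_pow_def
    by (simp add: fun_eq_iff mon_def aut_pow[OF asi] pow_swap)
  have inC: "\<forall>i<l. frob_pow q (s * i) p \<in> C" using Wj0 unfolding W_def frob by blast
  have "bij p"
  proof -
    have "p = si \<circ> mon q j0 \<circ> gi \<circ> \<sigma>" unfolding p_def T_def by (simp add: fun_eq_iff)
    moreover have "bij si" using asi field_aut_def by blast
    moreover have "bij gi" unfolding gi_def by (rule bij_imp_bij_inv[OF hg(4)])
    ultimately show ?thesis using mon_bij[OF q j0(1)] bs by (simp add: bij_comp)
  qed
  moreover have "p \<in> Lnq q n"
  proof -
    have "frob_pow q (s * 0) p = p" by (simp add: frob_pow_def)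
    moreover have "frob_pow q (s * 0) p \<in> C" using inC False by blast
    ultimately show ?thesis using CL by auto
  qed
  ultimately show ?thesis using inC by blast
qed


theorem lemma3p7:
  fixes C G :: "('a::{field,finite} \<Rightarrow> 'a) set" and q n k l s :: nat
  assumes "primepow q" and "n \<ge> 1" and "card (UNIV :: 'a set) = q ^ n"
    and "coprime s n"
    and "C \<subseteq> Lnq q n" and "module.subspace scl C" and "vector_space.dim scl C = k"
    and "G \<subseteq> C" and "is_MRD q n G" and "code_equiv q n G (Gab q l s)"
    and "l \<le> k"
  shows "\<exists>p Q. p \<in> Lnq q n \<and> bij p \<and> length Q = k - l \<and> set Q \<subseteq> Lnq q n \<and>
     C = module.span scl (set Q \<union> {frob_pow q (s * i) p | i. i < l})"
proof -
  note q = assms(1,3,2)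
  obtain p where p: "bij p" "p \<in> Lnq q n" "\<forall>i<l. frob_pow q (s*i) p \<in> C"
    using exists_p[OF q assms(5,6,8,10)] by blast
  have "C \<subseteq> VS.span (Mset q n)" using assms(5) Lnq_span[where 'a='a] by simp
  hence "k \<le> card (Mset q n :: ('a \<Rightarrow> 'a) set)"
    using VS.dim_le_card[of C "Mset q n"] assms(7) by (simp add: Mset_def)
  also have "\<dots> \<le> n" unfolding Mset_def using card_image_le[of "{..<n}"] by simp
  finally have ln: "l \<le> n" using assms(11) by simp
  define e where "e = (\<lambda>i. frob_pow q (s*i) p)"
  define r where "r = (\<lambda>i. (s * i) mod n)"
  have rn: "r i < n" for i using assms(2) by (simp add: r_def)
  have pinv: "p (inv_into UNIV p y) = y" for y using surj_f_inv_f[OF bij_is_surj[OF p(1)]] by simp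
  have ev: "e i (inv_into UNIV p y) = y ^ q ^ r i" for i y
    unfolding e_def frob_pow_def r_def using pinv mon_mod[OF assms(3)] by simp
  have rinj: "inj_on r {..<l}"
  proof
    fix i i' assume ii: "i \<in> {..<l}" "i' \<in> {..<l}" "r i = r i'"
    hence "[s * i = s * i'] (mod n)" by (simp add: r_def cong_def)
    hence "[i = i'] (mod n)" using cong_mult_lcancel_nat[OF assms(4)] by blast
    thus "i = i'" using ii ln by (simp add: cong_def)
  qed
  have einj: "inj_on e {..<l}"
  proof
    fix i i' assume ii: "i \<in> {..<l}" "i' \<in> {..<l}" "e i = e i'"
    have "(mon q (r i) :: 'a \<Rightarrow> 'a) = mon q (r i')"
    proof
      fix y :: 'a show "mon q (r i) y = mon q (r i') y" using ev[of i y] ev[of i' y] ii(3) by (simp add: mon_def)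
    qed
    hence "r i = r i'" using mon_inj[OF q _ rn rn] by blast
    thus "i = i'" using rinj ii(1,2) by (simp add: inj_on_def)
  qed
  define P where "P = e ` {..<l}"
  have Peq: "{frob_pow q (s * i) p | i. i < l} = P" unfolding P_def e_def by auto
  have PC: "P \<subseteq> C" unfolding P_def e_def using p(3) by auto
  have cardP: "card P = l" unfolding P_def using card_image[OF einj] by simp
  have indP: "VS.independent P"
  proof (rule VS.independent_if_scalars_zero)
    show "finite P" unfolding P_def by simp
    fix u x assume sum0: "(\<Sum>x\<in>P. scl (u x) x) = 0" and xP: "x \<in> P"
    then obtain i0 where i0: "i0 < l" "x = e i0" unfolding P_def by (auto simp: image_iff)
    have z: "(\<Sum>i<l. u (e i) * y ^ q ^ r i) = 0" for y
    proof -
      have "(\<Sum>i<l. u (e i) * y ^ q ^ r i) = (\<Sum>i<l. scl (u (e i)) (e i) (inv_into UNIV p y))"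
        by (simp add: scl_def ev)
      also have "\<dots> = (\<Sum>i<l. scl (u (e i)) (e i)) (inv_into UNIV p y)" by (simp add: sum_fun_app)
      also have "(\<Sum>i<l. scl (u (e i)) (e i)) = (\<Sum>x\<in>P. scl (u x) x)"
        unfolding P_def by (simp add: sum.reindex[OF einj])
      finally show ?thesis using sum0 by simp
    qed
    define d where "d = (\<lambda>j. if j \<in> r ` {..<l} then u (e (the_inv_into {..<l} r j)) else 0)"
    have "lin_eval q n d y = 0" for y :: 'a
    proof -
      have "lin_eval q n d y = (\<Sum>j\<in>r ` {..<l}. d j * y ^ q ^ j)"
        unfolding lin_eval_def
        by (rule sum.mono_neutral_right) (auto simp: rn d_def)
      also have "\<dots> = (\<Sum>i<l. d (r i) * y ^ q ^ r i)" by (simp add: sum.reindex[OF rinj])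
      also have "\<dots> = (\<Sum>i<l. u (e i) * y ^ q ^ r i)"
        by (rule sum.cong) (auto simp: d_def the_inv_into_f_f[OF rinj])
      finally show ?thesis using z by simp
    qed
    hence "d (r i0) = 0" using lin_eval_zero_coeff[OF q] rn by blast
    thus "u x = 0" using i0 by (simp add: d_def the_inv_into_f_f[OF rinj])
  qed
  obtain B where B: "P \<subseteq> B" "B \<subseteq> C" "VS.independent B" "C \<subseteq> VS.span B"
    using VS.maximal_independent_subset_extend[OF PC indP] by blast
  have cardB: "card B = k" using VS.basis_card_eq_dim[OF B(2,4,3)] assms(7) by simp
  have finB: "finite B" by simp
  obtain Q where Q: "set Q = B - P" "distinct Q" using finite_distinct_list[of "B - P"] finB by blast
  have lenQ: "length Q = k - l"
    using distinct_card[OF Q(2)] Q(1) card_Diff_subset[OF finite_subset[OF B(1) finB] B(1)] cardB cardP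
    by simp
  have BQ: "set Q \<union> P = B" using Q(1) B(1) by blast
  have "VS.span B \<subseteq> C" using VS.span_minimal[OF B(2) assms(6)] .
  hence "C = VS.span (set Q \<union> P)" using B(4) BQ by blast
  moreover have "set Q \<subseteq> Lnq q n" using Q(1) B(2) assms(5) by blast
  ultimately show ?thesis using p(1,2) lenQ Peq by (intro exI[of _ p] exI[of _ Q]) simp
qed

end
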